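(* Let $G$, $\mathrm{b}$, $(w_{ij})$, the update sequence $A$, Async-BP and the generalized computation trees $R_i^t$ be as in the context. Then Async-BP solves the minimum weight perfect tree-$\mathrm{b}$-matching problem on the generalized computation tree: for each vertex $i$ of $G$ and each $t$, the set $E_i(t)$ chosen at the end of iteration $t$ by Async-BP is exactly the set of $b_i$ edges attached to the root (via labels) in the minimum weight perfect tree-$\mathrm{b}$-matching of $R_i^t$.
   Context: Let $G=(V,E)$ be a finite undirected simple graph, $V=\{1,\dots,n\}$, with real edge weights $w_{ij}$ and positive integers $b_i$ with $\deg_G(i)\ge b_i+1$; $N(i)$ is the neighbour set of $i$. Let $\vec E=\{(i\to j):\{i,j\}\in E\}$ and let $A=(\vec E(1),\vec E(2),\dots)$ be a sequence of subsets of $\vec E$ such that if $(i\to j)\in\vec E(t)\cap\vec E(t+s)$ and $(i\to j)\notin\bigcup_{r=1}^{s-1}\vec E(t+r)$ then $(\ell\to i)\in\bigcup_{r=1}^{s-1}\vec E(t+r)$ for some $\ell\in N(i)\setminus\{j\}$. Async-BP: $m_{i\to j}(0)=w_{ij}$; for $t\ge1$, $m_{i\to j}(t)=w_{ij}-\big(b_i\text{-th smallest of }\{m_{\ell\to i}(t-1):\ell\in N(i)\setminus\{j\}\}\big)$ if $(i\to j)\in\vec E(t)$, else $m_{i\to j}(t)=m_{i\to j}(t-1)$; $E_i(t)$ consists of the $b_i$ edges $\{i,j\}$ whose incoming messages $m_{j\to i}(t)$ are smallest (neighbours ordered by nondecreasing incoming message). Computation branches: for $(i\to j)\in\vec E$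 and $t\ge0$, $R^t_{i\to j}$ is the rooted labelled tree whose root is labelled $j$ and has a single child labelled $i$; if $t=0$ it is just this edge; if $t>0$ and $(i\to j)\notin\vec E(t)$ then $R^t_{i\to j}=R^{t-1}_{i\to j}$; otherwise the node $i$ has $\deg_G(i)-1$ children labelled by the elements of $N(i)\setminus\{j\}$, and for each such child $r$, the subtree consisting of $r$, its descendants and the edge $\{r,i\}$ is a copy of $R^{t-1}_{r\to i}$. Each edge between nodes labelled $a,c$ has weight $w_{ac}$. The generalized computation tree $R_i^t$ is the rooted tree with root labelled $i$ whose branches from the root are the computation branches $R^t_{r\to i}$, $r\in N(i)$ (glued at their roots). A perfect tree-$\mathrm{b}$-matching of $R_i^t$ is a set of its edges such that every non-leaf node labelled $s$ is incident to exactly $b_s$ of them; the minimum weight one minimizes total weight. *)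

theory Defs
  imports Complex_Main "HOL-Library.Multiset"
begin

text \<open>Simple graph: finite vertex set V, edges are 2-element subsets of V.
  Weights are given on (undirected) edges: w_ij = w {i,j}.\<close>

definition simple_graph :: "'v set \<Rightarrow> 'v set set \<Rightarrow> bool" where
  "simple_graph V E \<longleftrightarrow> finite V \<and> (\<forall>e\<in>E. \<exists>x y. x \<in> V \<and> y \<in> V \<and> x \<noteq> y \<and> e = {x, y})"

definition nbrs :: "'v set set \<Rightarrow> 'v \<Rightarrow> 'v set" where
  "nbrs E i = {j. {i, j} \<in> E}"

definition darcs :: "'v set set \<Rightarrow> ('v \<times> 'v) set" where
  "darcs E = {(i, j). {i, j} \<in> E}"

text \<open>Admissible update sequence A = (A 1, A 2, ...); A 0 is unused.\<close>
definition valid_schedule :: "'v set set \<Rightarrow> (nat \<Rightarrow> ('v \<times> 'v) set) \<Rightarrow> bool" where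
  "valid_schedule E A \<longleftrightarrow>
     (\<forall>t\<ge>1. A t \<subseteq> darcs E) \<and>
     (\<forall>t\<ge>1. \<forall>s\<ge>1. \<forall>i j. (i, j) \<in> A t \<and> (i, j) \<in> A (t + s) \<and>
          (i, j) \<notin> (\<Union>r\<in>{1..s-1}. A (t + r)) \<longrightarrow>
          (\<exists>l \<in> nbrs E i - {j}. (l, i) \<in> (\<Union>r\<in>{1..s-1}. A (t + r))))"

definition kth_smallest :: "nat \<Rightarrow> real multiset \<Rightarrow> real" where
  "kth_smallest k M = sorted_list_of_multiset M ! (k - 1)"

fun msg :: "'v set set \<Rightarrow> ('v set \<Rightarrow> real) \<Rightarrow> ('v \<Rightarrow> nat) \<Rightarrow> (nat \<Rightarrow> ('v \<times> 'v) set)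
             \<Rightarrow> nat \<Rightarrow> 'v \<Rightarrow> 'v \<Rightarrow> real" where
  "msg E w b A 0 i j = w {i, j}"
| "msg E w b A (Suc t) i j =
     (if (i, j) \<in> A (Suc t)
      then w {i, j} - kth_smallest (b i)
             (image_mset (\<lambda>l. msg E w b A t l i) (mset_set (nbrs E i - {j})))
      else msg E w b A t i j)"

text \<open>F is a valid choice of the b_i neighbours of i with the smallest incoming
  messages m_{j->i}(t) (any tie-breaking); E_i(t) = {{i,j} | j in F}.\<close>
definition bp_choice :: "'v set set \<Rightarrow> ('v set \<Rightarrow> real) \<Rightarrow> ('v \<Rightarrow> nat) \<Rightarrow> (nat \<Rightarrow> ('v \<times> 'v) set)
             \<Rightarrow> nat \<Rightarrow> 'v \<Rightarrow> 'v set \<Rightarrow> bool" where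
  "bp_choice E w b A t i F \<longleftrightarrow> F \<subseteq> nbrs E i \<and> card F = b i \<and>
     (\<forall>j\<in>F. \<forall>k\<in>nbrs E i - F. msg E w b A t j i \<le> msg E w b A t k i)"

text \<open>Trees are represented by their node sets; a node is identified by the list of
  labels on the path from the root down to it (children of a node carry distinct labels).
  branch E A t i j is the set of nodes of the subtree of R^t_{i->j} hanging at the node
  labelled i (paths starting with i).\<close>
fun branch :: "'v set set \<Rightarrow> (nat \<Rightarrow> ('v \<times> 'v) set) \<Rightarrow> nat \<Rightarrow> 'v \<Rightarrow> 'v \<Rightarrow> 'v list set" where
  "branch E A 0 i j = {[i]}"
| "branch E A (Suc t) i j =
     (if (i, j) \<in> A (Suc t)
      then {[i]} \<union> {i # p | p r. r \<in> nbrs E i - {j} \<and> p \<in> branch E A t r i}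
      else branch E A t i j)"

definition comp_tree :: "'v set set \<Rightarrow> (nat \<Rightarrow> ('v \<times> 'v) set) \<Rightarrow> nat \<Rightarrow> 'v \<Rightarrow> 'v list set" where
  "comp_tree E A t i = {[i]} \<union> {i # p | p r. r \<in> nbrs E i \<and> p \<in> branch E A t r i}"

text \<open>Edges of a tree T are identified with their lower (child) endpoint q, length q >= 2;
  the edge joins q to its parent butlast q.\<close>
definition tree_edges :: "'v list set \<Rightarrow> 'v list set" where
  "tree_edges T = {q \<in> T. 2 \<le> length q}"

definition tree_edge_weight :: "('v set \<Rightarrow> real) \<Rightarrow> 'v list \<Rightarrow> real" where
  "tree_edge_weight w q = w {last (butlast q), last q}"

definition non_leaf :: "'v list set \<Rightarrow> 'v list \<Rightarrow> bool" where
  "non_leaf T p \<longleftrightarrow> p \<in> T \<and> (\<exists>c. p @ [c] \<in> T)"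

text \<open>Tree edges incident to node p: the edge to its parent (p itself) and the edges to its children.\<close>
definition incident :: "'v list set \<Rightarrow> 'v list \<Rightarrow> 'v list set" where
  "incident M p = {q \<in> M. q = p \<or> butlast q = p}"

definition perfect_tree_b_matching :: "('v \<Rightarrow> nat) \<Rightarrow> 'v list set \<Rightarrow> 'v list set \<Rightarrow> bool" where
  "perfect_tree_b_matching b T M \<longleftrightarrow> M \<subseteq> tree_edges T \<and>
     (\<forall>p. non_leaf T p \<longrightarrow> card (incident M p) = b (last p))"

definition min_perfect_tree_b_matching ::
  "('v set \<Rightarrow> real) \<Rightarrow> ('v \<Rightarrow> nat) \<Rightarrow> 'v list set \<Rightarrow> 'v list set \<Rightarrow> bool" where
  "min_perfect_tree_b_matching w b T M \<longleftrightarrow> perfect_tree_b_matching b T M \<and>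
     (\<forall>M'. perfect_tree_b_matching b T M' \<longrightarrow>
        (\<Sum>q\<in>M. tree_edge_weight w q) \<le> (\<Sum>q\<in>M'. tree_edge_weight w q))"

end

theory Submission
  imports Defs
begin

lemma minsel:
  fixes f :: "'a \<Rightarrow> real"
  assumes "finite R" "P \<subseteq> R" "T \<subseteq> R" "card P = card T"
    and thr: "\<forall>x\<in>P. \<forall>y\<in>R-P. f x \<le> f y"
  shows "sum f P \<le> sum f T"
proof -
  have fP: "finite P" "finite T" using assms(1,2,3) finite_subset by auto
  have sP: "sum f P = sum f (P \<inter> T) + sum f (P - T)"
    using fP sum.Int_Diff by blast
  have sT: "sum f T = sum f (P \<inter> T) + sum f (T - P)"
    using fP sum.Int_Diff[of T f P] by (simp add: Int_commute)
  have cd: "card (P - T) = card (T - P)"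
    using fP assms(4) card_Diff_subset_Int[of P T] card_Diff_subset_Int[of T P] by (simp add: Int_commute)
  show ?thesis
  proof (cases "P - T = {}")
    case True
    then have "T - P = {}" using cd fP by (metis card_0_eq finite_Diff)
    then have "sum f (T - P) = 0" "sum f (P - T) = 0" using True by simp_all
    then show ?thesis using sP sT by linarith
  next
    case False
    define c where "c = Max (f ` (P - T))"
    have fin: "finite (f ` (P - T))" using fP by simp
    have c1: "\<forall>x\<in>P - T. f x \<le> c" unfolding c_def using fin by auto
    have "c \<in> f ` (P - T)" unfolding c_def using False fin by (intro Max_in) auto
    then obtain x0 where x0: "x0 \<in> P - T" "c = f x0" by auto
    have c2: "\<forall>y\<in>T - P. c \<le> f y" using x0 thr assms(3) by auto
    have "sum f (P - T) \<le> of_nat (card (P - T)) * c"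
      using sum_bounded_above[of "P - T" f c] c1 by auto
    also have "\<dots> = of_nat (card (T - P)) * c" using cd by simp
    also have "\<dots> \<le> sum f (T - P)"
      using sum_bounded_below[of "T - P" c f] c2 by auto
    finally show ?thesis using sP sT by linarith
  qed
qed

lemma select:
  fixes f :: "'a \<Rightarrow> real"
  assumes "finite R" "k \<le> card R" "1 \<le> k"
  shows "\<exists>P P'. P \<subseteq> R \<and> card P = k \<and> (\<forall>x\<in>P. \<forall>y\<in>R-P. f x \<le> f y) \<and>
     P' \<subseteq> R \<and> card P' = k - 1 \<and> (\<forall>x\<in>P'. \<forall>y\<in>R-P'. f x \<le> f y) \<and>
     sum f P - sum f P' = kth_smallest k (image_mset f (mset_set R))"
proof -
  obtain xs where xs: "distinct xs" "set xs = R" using assms(1) finite_distinct_list by blast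
  define ys where "ys = sort_key f xs"
  have ys: "distinct ys" "set ys = R" "sorted (map f ys)" "mset ys = mset xs"
    using xs unfolding ys_def by (auto simp: sorted_sort_key)
  have len: "length ys = card R" using ys distinct_card by metis
  have ms: "image_mset f (mset_set R) = mset (map f ys)"
    using xs ys mset_set_set by (metis mset_map)
  have kth: "kth_smallest k (image_mset f (mset_set R)) = f (ys ! (k - 1))"
    unfolding kth_smallest_def ms sorted_list_of_multiset_mset sorted_sort_id[OF ys(3)]
    using assms len by simp
  have thr: "\<forall>x\<in>set (take n ys). \<forall>y\<in>R - set (take n ys). f x \<le> f y" for n
  proof (intro ballI)
    fix x y assume x: "x \<in> set (take n ys)" and y: "y \<in> R - set (take n ys)"
    have y2: "y \<in> set (drop n ys)" using y ys(2)
      by (metis Diff_iff append_take_drop_id set_append Un_iff)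
    have "sorted (map f (take n ys) @ map f (drop n ys))"
      using ys(3) by (metis append_take_drop_id map_append)
    then show "f x \<le> f y" using x y2 by (auto simp: sorted_append)
  qed
  have cardt: "card (set (take n ys)) = n" if "n \<le> card R" for n
    using that ys(1) len by (simp add: distinct_card)
  have tk: "take k ys = take (k - 1) ys @ [ys ! (k - 1)]"
    using assms len take_Suc_conv_app_nth[of "k - 1" ys] by simp
  have nin: "ys ! (k - 1) \<notin> set (take (k - 1) ys)"
    using ys(1) tk by (metis distinct_take distinct_append disjoint_iff list.set_intros(1) set_append)
  have "sum f (set (take k ys)) = f (ys ! (k - 1)) + sum f (set (take (k - 1) ys))"
    using tk nin by simp
  moreover have "set (take n ys) \<subseteq> R" for n using ys(2) set_take_subset by metis
  ultimately show ?thesis using thr cardt assms kth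
    by (intro exI[of _ "set (take k ys)"] exI[of _ "set (take (k - 1) ys)"]) auto
qed

definition comb :: "'v \<Rightarrow> 'v set \<Rightarrow> ('v \<Rightarrow> 'v list set) \<Rightarrow> bool \<Rightarrow> 'v list set" where
  "comb i R Nf m = (if m then {[i]} else {}) \<union> {i # p | p r. r \<in> R \<and> p \<in> Nf r}"

definition restr :: "'v \<Rightarrow> 'v list set \<Rightarrow> 'v list set \<Rightarrow> 'v list set" where
  "restr i N Sr = {p \<in> Sr. i # p \<in> N}"

definition vld :: "('v \<Rightarrow> nat) \<Rightarrow> 'v list set \<Rightarrow> 'v list set \<Rightarrow> bool" where
  "vld b B N \<longleftrightarrow> N \<subseteq> B \<and> (\<forall>p. non_leaf B p \<longrightarrow> card (incident N p) = b (last p))"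

definition cost :: "('v set \<Rightarrow> real) \<Rightarrow> 'v \<Rightarrow> 'v list set \<Rightarrow> real" where
  "cost w j N = (\<Sum>q\<in>N. w {last (j # butlast q), last q})"

definition hdok :: "'v set \<Rightarrow> ('v \<Rightarrow> 'v list set) \<Rightarrow> bool" where
  "hdok R Nf \<longleftrightarrow> (\<forall>r\<in>R. \<forall>p\<in>Nf r. p \<noteq> [] \<and> hd p = r)"

lemma comb_mem:
  assumes "hdok R Nf"
  shows "q \<in> comb i R Nf m \<longleftrightarrow> (q = [i] \<and> m) \<or> (\<exists>p. q = i # p \<and> p \<noteq> [] \<and> hd p \<in> R \<and> p \<in> Nf (hd p))"
proof
  assume "q \<in> comb i R Nf m"
  then consider "q = [i] \<and> m" | p r where "q = i # p" "r \<in> R" "p \<in> Nf r"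
    unfolding comb_def by (auto split: if_splits)
  then show "(q = [i] \<and> m) \<or> (\<exists>p. q = i # p \<and> p \<noteq> [] \<and> hd p \<in> R \<and> p \<in> Nf (hd p))"
  proof cases
    case (2 p r)
    then have "p \<noteq> [] \<and> hd p = r" using assms unfolding hdok_def by blast
    then show ?thesis using 2 by (intro disjI2 exI[of _ p]) simp
  qed simp
next
  assume "(q = [i] \<and> m) \<or> (\<exists>p. q = i # p \<and> p \<noteq> [] \<and> hd p \<in> R \<and> p \<in> Nf (hd p))"
  then show "q \<in> comb i R Nf m"
  proof
    assume "q = [i] \<and> m" then show ?thesis unfolding comb_def by simp
  next
    assume "\<exists>p. q = i # p \<and> p \<noteq> [] \<and> hd p \<in> R \<and> p \<in> Nf (hd p)"
    then obtain p where "q = i # p" "hd p \<in> R" "p \<in> Nf (hd p)" by blast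
    then show ?thesis unfolding comb_def by blast
  qed
qed

lemma comb_Cons:
  assumes "hdok R Nf" "p \<noteq> []"
  shows "i # p \<in> comb i R Nf m \<longleftrightarrow> hd p \<in> R \<and> p \<in> Nf (hd p)"
  using comb_mem[OF assms(1)] assms(2) by auto

lemma comb_single:
  assumes "hdok R Nf"
  shows "[i] \<in> comb i R Nf m \<longleftrightarrow> m"
  using comb_mem[OF assms(1)] by auto

lemma hdok_sub: "hdok R S \<Longrightarrow> \<forall>r\<in>R. Nf r \<subseteq> S r \<Longrightarrow> hdok R Nf"
  unfolding hdok_def by blast

lemma comb_sub: "\<forall>r\<in>R. Nf r \<subseteq> S r \<Longrightarrow> comb i R Nf m \<subseteq> comb i R S True"
  unfolding comb_def by auto

lemma restr_comb:
  assumes "hdok R S" "\<forall>r\<in>R. Nf r \<subseteq> S r" "r \<in> R"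
  shows "restr i (comb i R Nf m) (S r) = Nf r"
proof -
  have h: "hdok R Nf" using hdok_sub assms by blast
  show ?thesis unfolding restr_def
  proof safe
    fix p assume "p \<in> S r" "i # p \<in> comb i R Nf m"
    moreover have "p \<noteq> [] \<and> hd p = r" using assms `p \<in> S r` unfolding hdok_def by blast
    ultimately show "p \<in> Nf r" using comb_Cons[OF h] by auto
  next
    fix p assume "p \<in> Nf r" then show "p \<in> S r" using assms by blast
  next
    fix p assume "p \<in> Nf r" then show "i # p \<in> comb i R Nf m" using assms unfolding comb_def by blast
  qed
qed

lemma comb_restr:
  assumes "hdok R S" "N \<subseteq> comb i R S True"
  shows "N = comb i R (\<lambda>r. restr i N (S r)) ([i] \<in> N)"
proof -
  have h: "hdok R (\<lambda>r. restr i N (S r))" using assms(1) unfolding hdok_def restr_def by auto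
  show ?thesis
  proof (rule set_eqI)
    fix q
    show "q \<in> N \<longleftrightarrow> q \<in> comb i R (\<lambda>r. restr i N (S r)) ([i] \<in> N)"
      unfolding comb_mem[OF h]
    proof
      assume q: "q \<in> N"
      then have "q \<in> comb i R S True" using assms by blast
      then show "(q = [i] \<and> [i] \<in> N) \<or> (\<exists>p. q = i # p \<and> p \<noteq> [] \<and> hd p \<in> R \<and> p \<in> restr i N (S (hd p)))"
        unfolding comb_mem[OF assms(1)] restr_def using q by auto
    next
      assume "(q = [i] \<and> [i] \<in> N) \<or> (\<exists>p. q = i # p \<and> p \<noteq> [] \<and> hd p \<in> R \<and> p \<in> restr i N (S (hd p)))"
      then show "q \<in> N" unfolding restr_def by auto
    qed
  qed
qed

lemma restr_sub: "restr i N Sr \<subseteq> Sr" unfolding restr_def by auto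

lemma nonleaf_root:
  assumes "\<forall>r\<in>R. [r] \<in> S r" "hdok R S"
  shows "non_leaf (comb i R S True) [i] \<longleftrightarrow> R \<noteq> {}"
proof
  assume "non_leaf (comb i R S True) [i]"
  then obtain c where "[i, c] \<in> comb i R S True" unfolding non_leaf_def by auto
  then show "R \<noteq> {}" using comb_Cons[OF assms(2), of "[c]"] by auto
next
  assume "R \<noteq> {}"
  then obtain r where "r \<in> R" by auto
  then have "[i] @ [r] \<in> comb i R S True" using assms comb_Cons[OF assms(2), of "[r]"] by auto
  moreover have "[i] \<in> comb i R S True" using comb_single[OF assms(2)] by auto
  ultimately show "non_leaf (comb i R S True) [i]" unfolding non_leaf_def by blast
qed

lemma nonleaf_Cons:
  assumes h: "hdok R S" and p: "p \<noteq> []"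
  shows "non_leaf (comb i R S True) (i # p) \<longleftrightarrow> hd p \<in> R \<and> non_leaf (S (hd p)) p"
proof -
  have e: "(i # p) @ [c] \<in> comb i R S True \<longleftrightarrow> hd p \<in> R \<and> p @ [c] \<in> S (hd p)" for c
    using comb_Cons[OF h, of "p @ [c]" i True] p by (simp add: hd_append2)
  have e2: "i # p \<in> comb i R S True \<longleftrightarrow> hd p \<in> R \<and> p \<in> S (hd p)"
    using comb_Cons[OF h, of p i True] p by simp
  show ?thesis unfolding non_leaf_def e e2 by blast
qed

lemma nonleaf_cases:
  assumes h: "hdok R S" and nl: "non_leaf (comb i R S True) q"
  shows "q = [i] \<or> (\<exists>p. q = i # p \<and> p \<noteq> [])"
proof -
  have "q \<in> comb i R S True" using nl unfolding non_leaf_def by simp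
  then show ?thesis unfolding comb_mem[OF h] by blast
qed

lemma incident_Cons:
  assumes h: "hdok R Nf" and p: "p \<noteq> []" "hd p \<in> R"
  shows "incident (comb i R Nf m) (i # p) = Cons i ` incident (Nf (hd p)) p"
proof (rule set_eqI)
  fix q
  show "q \<in> incident (comb i R Nf m) (i # p) \<longleftrightarrow> q \<in> Cons i ` incident (Nf (hd p)) p"
  proof
    assume q: "q \<in> incident (comb i R Nf m) (i # p)"
    then have qc: "q \<in> comb i R Nf m" and qq: "q = i # p \<or> butlast q = i # p" unfolding incident_def by auto
    obtain a q' where q': "q = a # q'" using qq by (cases q) auto
    have q'ne: "q' \<noteq> []" using qq q' p(1) by (cases q') auto
    have a: "a = i" using qq q' q'ne by (cases q') auto
    have qq': "q' = p \<or> butlast q' = p" using qq q' q'ne a by auto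
    have "hd q' = hd p"
    proof (cases "q' = p")
      case False
      then have "butlast q' = p" using qq' by simp
      then have "q' = p @ [last q']" using q'ne by (metis append_butlast_last_id)
      then show ?thesis using p(1) by (metis hd_append2)
    qed simp
    then have "q' \<in> Nf (hd p)" using qc q' a q'ne comb_Cons[OF h, of q' i m] by simp
    then have "q' \<in> incident (Nf (hd p)) p" using qq' unfolding incident_def by simp
    then show "q \<in> Cons i ` incident (Nf (hd p)) p" using q' a by simp
  next
    assume "q \<in> Cons i ` incident (Nf (hd p)) p"
    then obtain q' where q': "q = i # q'" "q' \<in> Nf (hd p)" "q' = p \<or> butlast q' = p"
      unfolding incident_def by auto
    have q'ne: "q' \<noteq> []" "hd q' = hd p" using q'(2) p(2) h unfolding hdok_def by auto
    have "q \<in> comb i R Nf m" using q' q'ne comb_Cons[OF h, of q' i m] p by simp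
    moreover have "q = i # p \<or> butlast q = i # p" using q' q'ne by auto
    ultimately show "q \<in> incident (comb i R Nf m) (i # p)" unfolding incident_def by simp
  qed
qed

lemma incident_root:
  assumes h: "hdok R Nf"
  shows "incident (comb i R Nf m) [i] = (if m then {[i]} else {}) \<union> (\<lambda>r. [i, r]) ` {r \<in> R. [r] \<in> Nf r}"
proof (rule set_eqI)
  fix q
  show "q \<in> incident (comb i R Nf m) [i] \<longleftrightarrow> q \<in> (if m then {[i]} else {}) \<union> (\<lambda>r. [i, r]) ` {r \<in> R. [r] \<in> Nf r}"
  proof
    assume q: "q \<in> incident (comb i R Nf m) [i]"
    then have qc: "q \<in> comb i R Nf m" and qq: "q = [i] \<or> butlast q = [i]" unfolding incident_def by auto
    show "q \<in> (if m then {[i]} else {}) \<union> (\<lambda>r. [i, r]) ` {r \<in> R. [r] \<in> Nf r}"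
    proof (cases "q = [i]")
      case True
      then show ?thesis using qc comb_single[OF h] by simp
    next
      case False
      then have "butlast q = [i]" using qq by simp
      then have "q \<noteq> []" by auto
      then have "q = butlast q @ [last q]" by simp
      then have qe: "q = [i, last q]" using \<open>butlast q = [i]\<close> by simp
      then have "last q \<in> R \<and> [last q] \<in> Nf (last q)" using qc comb_Cons[OF h, of "[last q]" i m] by simp
      then show ?thesis using qe by blast
    qed
  next
    assume "q \<in> (if m then {[i]} else {}) \<union> (\<lambda>r. [i, r]) ` {r \<in> R. [r] \<in> Nf r}"
    then show "q \<in> incident (comb i R Nf m) [i]"
    proof
      assume "q \<in> (if m then {[i]} else {})"
      then show ?thesis using comb_single[OF h] unfolding incident_def by (simp split: if_splits)
    next
      assume "q \<in> (\<lambda>r. [i, r]) ` {r \<in> R. [r] \<in> Nf r}"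
      then obtain r where "q = [i, r]" "r \<in> R" "[r] \<in> Nf r" by auto
      then show ?thesis using comb_Cons[OF h, of "[r]" i m] unfolding incident_def by simp
    qed
  qed
qed

lemma card_incident_root:
  assumes "hdok R Nf" "finite R"
  shows "card (incident (comb i R Nf m) [i]) = (if m then 1 else 0) + card {r \<in> R. [r] \<in> Nf r}"
proof -
  have inj: "inj (\<lambda>r. [i, r])" by (auto simp: inj_def)
  have "card ((\<lambda>r. [i, r]) ` {r \<in> R. [r] \<in> Nf r}) = card {r \<in> R. [r] \<in> Nf r}"
    using inj by (simp add: card_image inj_on_def)
  moreover have "finite ((\<lambda>r. [i, r]) ` {r \<in> R. [r] \<in> Nf r})" using assms(2) by simp
  moreover have "[i] \<notin> (\<lambda>r. [i, r]) ` {r \<in> R. [r] \<in> Nf r}" by auto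
  ultimately show ?thesis unfolding incident_root[OF assms(1)] by simp
qed

lemma nbrs_sub: "simple_graph V E \<Longrightarrow> nbrs E i \<subseteq> V"
  unfolding simple_graph_def nbrs_def by (auto simp: doubleton_eq_iff)

lemma nbrs_fin: "simple_graph V E \<Longrightarrow> finite (nbrs E i)"
  using nbrs_sub simple_graph_def finite_subset by metis

lemma branch_Suc_comb:
  "(i, j) \<in> A (Suc t) \<Longrightarrow> branch E A (Suc t) i j = comb i (nbrs E i - {j}) (\<lambda>r. branch E A t r i) True"
  unfolding comb_def by simp

lemma comp_tree_comb: "comp_tree E A t i = comb i (nbrs E i) (\<lambda>r. branch E A t r i) True"
  unfolding comb_def comp_tree_def by simp

lemma branch_props:
  assumes "simple_graph V E"
  shows "finite (branch E A t i j) \<and> [i] \<in> branch E A t i j \<and> (\<forall>p\<in>branch E A t i j. p \<noteq> [] \<and> hd p = i)"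
proof (induction t arbitrary: i j)
  case 0
  then show ?case by simp
next
  case (Suc t)
  show ?case
  proof (cases "(i, j) \<in> A (Suc t)")
    case False
    then show ?thesis using Suc by simp
  next
    case True
    let ?R = "nbrs E i - {j}"
    have eq: "{i # p | p r. r \<in> ?R \<and> p \<in> branch E A t r i} = (\<Union>r\<in>?R. Cons i ` branch E A t r i)"
      by auto
    have "finite ?R" using nbrs_fin[OF assms] by simp
    then have "finite (\<Union>r\<in>?R. Cons i ` branch E A t r i)" using Suc by simp
    then show ?thesis using True eq by auto
  qed
qed

lemma comb_valid:
  assumes fin: "finite R" and hS: "hdok R S" and sr: "\<forall>r\<in>R. [r] \<in> S r"
    and sub: "\<forall>r\<in>R. Nf r \<subseteq> S r"
  shows "vld b (comb i R S True) (comb i R Nf m) \<longleftrightarrow>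
     (\<forall>r\<in>R. vld b (S r) (Nf r)) \<and> (R \<noteq> {} \<longrightarrow> (if m then 1 else 0) + card {r \<in> R. [r] \<in> Nf r} = b i)"
proof -
  have hN: "hdok R Nf" using hdok_sub[OF hS sub] .
  have csub: "comb i R Nf m \<subseteq> comb i R S True" using comb_sub[OF sub] .
  have child: "non_leaf (comb i R S True) (i # p) \<longrightarrow> card (incident (comb i R Nf m) (i # p)) = b (last (i # p))
     \<longleftrightarrow> (hd p \<in> R \<and> non_leaf (S (hd p)) p \<longrightarrow> card (incident (Nf (hd p)) p) = b (last p))"
    if "p \<noteq> []" for p
  proof (cases "hd p \<in> R")
    case True
    have "card (incident (comb i R Nf m) (i # p)) = card (incident (Nf (hd p)) p)"
      unfolding incident_Cons[OF hN that True] by (simp add: card_image)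
    then show ?thesis using nonleaf_Cons[OF hS that] that by simp
  next
    case False
    then show ?thesis using nonleaf_Cons[OF hS that] by simp
  qed
  have root: "(non_leaf (comb i R S True) [i] \<longrightarrow> card (incident (comb i R Nf m) [i]) = b (last [i]))
     \<longleftrightarrow> (R \<noteq> {} \<longrightarrow> (if m then 1 else 0) + card {r \<in> R. [r] \<in> Nf r} = b i)"
    using nonleaf_root[OF sr hS, of i] card_incident_root[OF hN fin, of i m] by simp
  show ?thesis
  proof
    assume v: "vld b (comb i R S True) (comb i R Nf m)"
    have A: "\<forall>r\<in>R. vld b (S r) (Nf r)"
    proof
      fix r assume r: "r \<in> R"
      show "vld b (S r) (Nf r)" unfolding vld_def
      proof (intro conjI allI impI)
        show "Nf r \<subseteq> S r" using sub r by blast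
      next
        fix p assume nl: "non_leaf (S r) p"
        then have pS: "p \<in> S r" unfolding non_leaf_def by simp
        then have p: "p \<noteq> []" "hd p = r" using hS r unfolding hdok_def by auto
        have "non_leaf (comb i R S True) (i # p) \<longrightarrow> card (incident (comb i R Nf m) (i # p)) = b (last (i # p))"
          using v unfolding vld_def by blast
        then show "card (incident (Nf r) p) = b (last p)" using child[OF p(1)] p r nl nonleaf_Cons[OF hS p(1), of i] by simp
      qed
    qed
    have B: "R \<noteq> {} \<longrightarrow> (if m then 1 else 0) + card {r \<in> R. [r] \<in> Nf r} = b i"
      using v root unfolding vld_def by blast
    show "(\<forall>r\<in>R. vld b (S r) (Nf r)) \<and> (R \<noteq> {} \<longrightarrow> (if m then 1 else 0) + card {r \<in> R. [r] \<in> Nf r} = b i)"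
      using A B by blast
  next
    assume a: "(\<forall>r\<in>R. vld b (S r) (Nf r)) \<and> (R \<noteq> {} \<longrightarrow> (if m then 1 else 0) + card {r \<in> R. [r] \<in> Nf r} = b i)"
    show "vld b (comb i R S True) (comb i R Nf m)" unfolding vld_def
    proof (intro conjI allI impI)
      show "comb i R Nf m \<subseteq> comb i R S True" by (rule csub)
    next
      fix q assume nl: "non_leaf (comb i R S True) q"
      from nonleaf_cases[OF hS nl] show "card (incident (comb i R Nf m) q) = b (last q)"
      proof
        assume "q = [i]" then show ?thesis using root a nl by simp
      next
        assume "\<exists>p. q = i # p \<and> p \<noteq> []"
        then obtain p where p: "q = i # p" "p \<noteq> []" by blast
        have "hd p \<in> R \<and> non_leaf (S (hd p)) p" using nl p nonleaf_Cons[OF hS p(2)] by simp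
        then have "card (incident (Nf (hd p)) p) = b (last p)" using a unfolding vld_def by blast
        then show ?thesis using child[OF p(2)] nl p by simp
      qed
    qed
  qed
qed

lemma cost_comb:
  assumes fin: "finite R" and hN: "hdok R Nf" and finN: "\<forall>r\<in>R. finite (Nf r)"
  shows "cost w j (comb i R Nf m) = (if m then w {j, i} else 0) + (\<Sum>r\<in>R. cost w i (Nf r))"
proof -
  have eq: "comb i R Nf m = (if m then {[i]} else {}) \<union> (\<Union>r\<in>R. Cons i ` Nf r)"
    unfolding comb_def by auto
  have disj: "(if m then {[i]} else {}) \<inter> (\<Union>r\<in>R. Cons i ` Nf r) = {}"
    using hN unfolding hdok_def by auto
  have finU: "finite (\<Union>r\<in>R. Cons i ` Nf r)" using fin finN by simp
  have pd: "\<forall>r\<in>R. \<forall>r'\<in>R. r \<noteq> r' \<longrightarrow> Cons i ` Nf r \<inter> Cons i ` Nf r' = {}"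
  proof (intro ballI impI)
    fix r r' assume "r \<in> R" "r' \<in> R" "r \<noteq> r'"
    have "hd p = r" if "p \<in> Nf r" for p using hN \<open>r \<in> R\<close> that unfolding hdok_def by blast
    moreover have "hd p = r'" if "p \<in> Nf r'" for p using hN \<open>r' \<in> R\<close> that unfolding hdok_def by blast
    ultimately have "Nf r \<inter> Nf r' = {}" using \<open>r \<noteq> r'\<close> by blast
    then show "Cons i ` Nf r \<inter> Cons i ` Nf r' = {}" by auto
  qed
  let ?g = "\<lambda>q. w {last (j # butlast q), last q}"
  have "cost w j (comb i R Nf m) = sum ?g (if m then {[i]} else {}) + sum ?g (\<Union>r\<in>R. Cons i ` Nf r)"
    unfolding cost_def eq using disj finU by (simp add: sum.union_disjoint)
  also have "sum ?g (if m then {[i]} else {}) = (if m then w {j, i} else 0)" by simp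
  also have "sum ?g (\<Union>r\<in>R. Cons i ` Nf r) = (\<Sum>r\<in>R. sum ?g (Cons i ` Nf r))"
    using sum.UNION_disjoint[of R "\<lambda>r. Cons i ` Nf r" ?g] fin finN pd by simp
  also have "\<dots> = (\<Sum>r\<in>R. cost w i (Nf r))"
  proof (rule sum.cong)
    fix r assume r: "r \<in> R"
    have "sum ?g (Cons i ` Nf r) = sum (?g \<circ> Cons i) (Nf r)" by (simp add: sum.reindex)
    also have "\<dots> = cost w i (Nf r)" unfolding cost_def
    proof (rule sum.cong)
      fix p assume "p \<in> Nf r"
      then have "p \<noteq> []" using hN r unfolding hdok_def by blast
      then show "(?g \<circ> Cons i) p = w {last (i # butlast p), last p}" by simp
    qed simp
    finally show "sum ?g (Cons i ` Nf r) = cost w i (Nf r)" .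
  qed simp
  finally show ?thesis .
qed

lemma sum_sel:
  fixes c0 c1 :: "'a \<Rightarrow> real"
  assumes "finite R" "P \<subseteq> R"
  shows "(\<Sum>r\<in>R. if r \<in> P then c1 r else c0 r) = (\<Sum>r\<in>R. c0 r) + (\<Sum>r\<in>P. c1 r - c0 r)"
proof -
  have "(\<Sum>r\<in>R. if r \<in> P then c1 r else c0 r) = (\<Sum>r\<in>R. c0 r + (if r \<in> P then c1 r - c0 r else 0))"
    by (rule sum.cong) auto
  also have "\<dots> = (\<Sum>r\<in>R. c0 r) + (\<Sum>r\<in>R. if r \<in> P then c1 r - c0 r else 0)"
    by (simp add: sum.distrib)
  also have "(\<Sum>r\<in>R. if r \<in> P then c1 r - c0 r else 0) = (\<Sum>r\<in>R \<inter> P. c1 r - c0 r)"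
    using assms(1) by (simp add: sum.inter_restrict)
  also have "R \<inter> P = P" using assms(2) by blast
  finally show ?thesis .
qed

lemma vld_base: "vld b {[i]} N \<longleftrightarrow> N \<subseteq> {[i]}"
  unfolding vld_def non_leaf_def by auto

definition goodpair where
  "goodpair b w B i j N0 N1 \<longleftrightarrow> vld b B N0 \<and> [i] \<notin> N0 \<and> vld b B N1 \<and> [i] \<in> N1 \<and>
     (\<forall>N. vld b B N \<and> [i] \<notin> N \<longrightarrow> cost w j N0 \<le> cost w j N) \<and>
     (\<forall>N. vld b B N \<and> [i] \<in> N \<longrightarrow> cost w j N1 \<le> cost w j N)"

lemma main:
  assumes g: "simple_graph V E" and bb: "\<forall>v\<in>V. 0 < b v \<and> b v + 1 \<le> card (nbrs E v)"
  shows "i \<in> V \<Longrightarrow> \<exists>N0 N1. goodpair b w (branch E A t i j) i j N0 N1 \<and>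
     cost w j N1 - cost w j N0 = msg E w b A t i j"
proof (induction t arbitrary: i j)
  case 0
  have "goodpair b w (branch E A 0 i j) i j {} {[i]}"
    unfolding goodpair_def branch.simps(1) vld_base by (auto simp: cost_def subset_singleton_iff)
  moreover have "cost w j {[i]} - cost w j {} = msg E w b A 0 i j"
    by (simp add: cost_def insert_commute)
  ultimately show ?case by blast
next
  case (Suc t)
  show ?case
  proof (cases "(i, j) \<in> A (Suc t)")
    case False
    then show ?thesis using Suc by simp
  next
    case True
    define R where "R = nbrs E i - {j}"
    define S where "S = (\<lambda>r. branch E A t r i)"
    define f where "f = (\<lambda>r. msg E w b A t r i)"
    define k where "k = b i"
    have B: "branch E A (Suc t) i j = comb i R S True"
      unfolding R_def S_def using branch_Suc_comb[of i j A t E] True by simp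
    have finR: "finite R" unfolding R_def using nbrs_fin[OF g] by simp
    have RV: "R \<subseteq> V" unfolding R_def using nbrs_sub[OF g] by blast
    have hS: "hdok R S" unfolding hdok_def S_def using branch_props[OF g] by blast
    have sr: "\<forall>r\<in>R. [r] \<in> S r" unfolding S_def using branch_props[OF g] by blast
    have finS: "\<forall>r\<in>R. finite (S r)" unfolding S_def using branch_props[OF g] by blast
    have k1: "1 \<le> k" unfolding k_def using bb Suc.prems by auto
    have kR: "k \<le> card R"
    proof -
      have "k + 1 \<le> card (nbrs E i)" unfolding k_def using bb Suc.prems by auto
      moreover have "card (nbrs E i) - card {j} \<le> card R" unfolding R_def
        using diff_card_le_card_Diff[of "{j}" "nbrs E i"] by simp
      ultimately show ?thesis by simp
    qed
    have Rne: "R \<noteq> {}" using kR k1 by auto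
    have "\<forall>r\<in>R. \<exists>N0 N1. goodpair b w (S r) r i N0 N1 \<and> cost w i N1 - cost w i N0 = f r"
      unfolding S_def f_def using Suc.IH RV by blast
    then obtain n0 n1 where nn: "\<forall>r\<in>R. goodpair b w (S r) r i (n0 r) (n1 r) \<and> cost w i (n1 r) - cost w i (n0 r) = f r"
      by metis
    define c0 where "c0 = (\<lambda>r. cost w i (n0 r))"
    define c1 where "c1 = (\<lambda>r. cost w i (n1 r))"
    have gen: "vld b (comb i R S True) (comb i R (\<lambda>r. if r \<in> Q then n1 r else n0 r) mm) \<and>
       cost w j (comb i R (\<lambda>r. if r \<in> Q then n1 r else n0 r) mm) = (if mm then w {j, i} else 0) + sum c0 R + sum f Q \<and>
       (\<forall>N. vld b (comb i R S True) N \<and> ([i] \<in> N \<longleftrightarrow> mm) \<longrightarrow> cost w j (comb i R (\<lambda>r. if r \<in> Q then n1 r else n0 r) mm) \<le> cost w j N)"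
      if Q: "Q \<subseteq> R" "card Q = k - (if mm then 1 else 0)" "\<forall>x\<in>Q. \<forall>y\<in>R-Q. f x \<le> f y" for Q mm
    proof -
      define Nf where "Nf = (\<lambda>r. if r \<in> Q then n1 r else n0 r)"
      have vN: "vld b (S r) (Nf r)" if "r \<in> R" for r using nn that unfolding Nf_def goodpair_def by auto
      have sub: "\<forall>r\<in>R. Nf r \<subseteq> S r" using vN unfolding vld_def by blast
      have hN: "hdok R Nf" using hdok_sub[OF hS sub] .
      have finN: "\<forall>r\<in>R. finite (Nf r)" using sub finS finite_subset by metis
      have selQ: "{r \<in> R. [r] \<in> Nf r} = Q" using nn Q(1) unfolding Nf_def goodpair_def by auto
      have V1: "vld b (comb i R S True) (comb i R Nf mm)"
        unfolding comb_valid[OF finR hS sr sub] using vN selQ Q(2) k1 k_def by auto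
      have costQ: "(\<Sum>r\<in>R. cost w i (Nf r)) = sum c0 R + sum f Q"
      proof -
        have "(\<Sum>r\<in>R. cost w i (Nf r)) = (\<Sum>r\<in>R. if r \<in> Q then c1 r else c0 r)"
          unfolding Nf_def c0_def c1_def by (rule sum.cong) auto
        also have "\<dots> = sum c0 R + (\<Sum>r\<in>Q. c1 r - c0 r)" using sum_sel[OF finR Q(1)] .
        also have "(\<Sum>r\<in>Q. c1 r - c0 r) = sum f Q"
          using nn Q(1) unfolding c0_def c1_def by (intro sum.cong) auto
        finally show ?thesis .
      qed
      have C1: "cost w j (comb i R Nf mm) = (if mm then w {j, i} else 0) + sum c0 R + sum f Q"
        unfolding cost_comb[OF finR hN finN] costQ by simp
      have OPT: "cost w j (comb i R Nf mm) \<le> cost w j N" if N: "vld b (comb i R S True) N" "[i] \<in> N \<longleftrightarrow> mm" for N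
      proof -
        define Nr where "Nr = (\<lambda>r. restr i N (S r))"
        have Nsub: "N \<subseteq> comb i R S True" using N(1) unfolding vld_def by blast
        have Neq0: "N = comb i R Nr ([i] \<in> N)" using comb_restr[OF hS Nsub] unfolding Nr_def .
        have Neq: "N = comb i R Nr mm" using trans[OF Neq0 arg_cong[where f="comb i R Nr", OF N(2)]] .
        have subr: "\<forall>r\<in>R. Nr r \<subseteq> S r" unfolding Nr_def by (simp add: restr_sub)
        have hNr: "hdok R Nr" using hdok_sub[OF hS subr] .
        have finNr: "\<forall>r\<in>R. finite (Nr r)" using subr finS finite_subset by metis
        have vv: "(\<forall>r\<in>R. vld b (S r) (Nr r)) \<and> (R \<noteq> {} \<longrightarrow> (if mm then 1 else 0) + card {r \<in> R. [r] \<in> Nr r} = b i)"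
          using N(1) Neq comb_valid[OF finR hS sr subr, of b i mm] by simp
        define T where "T = {r \<in> R. [r] \<in> Nr r}"
        have cT: "card T = card Q" unfolding T_def using vv Rne Q(2) k_def k1 by auto
        have TR: "T \<subseteq> R" unfolding T_def by blast
        have "(\<Sum>r\<in>R. if r \<in> T then c1 r else c0 r) \<le> (\<Sum>r\<in>R. cost w i (Nr r))"
        proof (rule sum_mono)
          fix r assume r: "r \<in> R"
          show "(if r \<in> T then c1 r else c0 r) \<le> cost w i (Nr r)"
            using nn r vv unfolding goodpair_def T_def c0_def c1_def by auto
        qed
        moreover have "(\<Sum>r\<in>R. if r \<in> T then c1 r else c0 r) = sum c0 R + sum f T"
        proof -
          have "(\<Sum>r\<in>R. if r \<in> T then c1 r else c0 r) = sum c0 R + (\<Sum>r\<in>T. c1 r - c0 r)"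
            using sum_sel[OF finR TR] .
          also have "(\<Sum>r\<in>T. c1 r - c0 r) = sum f T"
            using nn TR unfolding c0_def c1_def by (intro sum.cong) auto
          finally show ?thesis .
        qed
        moreover have "sum f Q \<le> sum f T" using minsel[OF finR Q(1) TR cT[symmetric] Q(3)] .
        moreover have "cost w j N = (if mm then w {j, i} else 0) + (\<Sum>r\<in>R. cost w i (Nr r))"
          using cost_comb[OF finR hNr finNr, where w=w and j=j and m=mm] Neq by simp
        ultimately show ?thesis using C1 by linarith
      qed
      show ?thesis using V1 C1 OPT unfolding Nf_def by blast
    qed
    obtain P P' where PP: "P \<subseteq> R" "card P = k" "\<forall>x\<in>P. \<forall>y\<in>R-P. f x \<le> f y"
      "P' \<subseteq> R" "card P' = k - 1" "\<forall>x\<in>P'. \<forall>y\<in>R-P'. f x \<le> f y"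
      "sum f P - sum f P' = kth_smallest k (image_mset f (mset_set R))"
      using select[OF finR kR k1, of f] by blast
    define N0 where "N0 = comb i R (\<lambda>r. if r \<in> P then n1 r else n0 r) False"
    define N1 where "N1 = comb i R (\<lambda>r. if r \<in> P' then n1 r else n0 r) True"
    have c0': "card P = k - (if False then 1 else 0)" using PP(2) by simp
    have c1': "card P' = k - (if True then 1 else 0)" using PP(5) by simp
    note G0 = gen[OF PP(1) c0' PP(3), simplified]
    note G1 = gen[OF PP(4) c1' PP(6), simplified]
    note G0' = G0[folded N0_def]
    note G1' = G1[folded N1_def]
    have g0: "vld b (comb i R S True) N0" "cost w j N0 = sum c0 R + sum f P"
       "\<forall>N. vld b (comb i R S True) N \<and> [i] \<notin> N \<longrightarrow> cost w j N0 \<le> cost w j N"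
      using conjunct1[OF G0'] conjunct1[OF conjunct2[OF G0']] conjunct2[OF conjunct2[OF G0']] by -
    have g1: "vld b (comb i R S True) N1" "cost w j N1 = w {j, i} + sum c0 R + sum f P'"
       "\<forall>N. vld b (comb i R S True) N \<and> [i] \<in> N \<longrightarrow> cost w j N1 \<le> cost w j N"
      using conjunct1[OF G1'] conjunct1[OF conjunct2[OF G1']] conjunct2[OF conjunct2[OF G1']] by -
    have s0: "\<forall>r\<in>R. (if r \<in> P then n1 r else n0 r) \<subseteq> S r"
      using nn unfolding goodpair_def vld_def by auto
    have s1: "\<forall>r\<in>R. (if r \<in> P' then n1 r else n0 r) \<subseteq> S r"
      using nn unfolding goodpair_def vld_def by auto
    have hP0: "hdok R (\<lambda>r. if r \<in> P then n1 r else n0 r)" using hdok_sub[OF hS s0] .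
    have hP1: "hdok R (\<lambda>r. if r \<in> P' then n1 r else n0 r)" using hdok_sub[OF hS s1] .
    have i0: "[i] \<notin> N0" unfolding N0_def using comb_single[OF hP0] by blast
    have i1: "[i] \<in> N1" unfolding N1_def using comb_single[OF hP1] by blast
    have "goodpair b w (branch E A (Suc t) i j) i j N0 N1"
      unfolding goodpair_def B using g0 g1 i0 i1 by blast
    moreover have "cost w j N1 - cost w j N0 = msg E w b A (Suc t) i j"
      using g0 g1 PP(7) True unfolding R_def f_def k_def by (simp add: insert_commute)
    ultimately show ?thesis by blast
  qed
qed

lemma tew_cost: "(\<Sum>q\<in>M. tree_edge_weight w q) = cost w i M" if "\<forall>q\<in>M. 2 \<le> length q"
  unfolding cost_def tree_edge_weight_def
proof (rule sum.cong)
  fix q assume "q \<in> M"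
  then have "butlast q \<noteq> []" using that by (cases q) auto
  then show "w {last (butlast q), last q} = w {last (i # butlast q), last q}" by simp
qed simp

theorem corollary2:
  fixes V :: "'v set" and E :: "'v set set" and w :: "'v set \<Rightarrow> real"
    and b :: "'v \<Rightarrow> nat" and A :: "nat \<Rightarrow> ('v \<times> 'v) set"
    and i :: 'v and t :: nat and M :: "'v list set" and F :: "'v set"
  assumes "simple_graph V E"
    and "\<forall>v\<in>V. 0 < b v \<and> b v + 1 \<le> card (nbrs E v)"
    and "valid_schedule E A"
    and "i \<in> V"
    and "min_perfect_tree_b_matching w b (comp_tree E A t i) M"
    and "\<forall>M'. min_perfect_tree_b_matching w b (comp_tree E A t i) M' \<longrightarrow> M' = M"
    and "bp_choice E w b A t i F"
  shows "{{i, j} | j. j \<in> F} = {{i, last q} | q. q \<in> M \<and> length q = 2}"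
proof -
  note g = assms(1) and bb = assms(2) and iV = assms(4) and minM = assms(5) and uniq = assms(6)
    and bp = assms(7)
  define R where "R = nbrs E i"
  define S where "S = (\<lambda>r. branch E A t r i)"
  define f where "f = (\<lambda>r. msg E w b A t r i)"
  define T where "T = comp_tree E A t i"
  have Teq: "T = comb i R S True" unfolding T_def R_def S_def by (rule comp_tree_comb)
  have finR: "finite R" unfolding R_def using nbrs_fin[OF g] .
  have RV: "R \<subseteq> V" unfolding R_def using nbrs_sub[OF g] .
  have hS: "hdok R S" unfolding hdok_def S_def using branch_props[OF g] by blast
  have sr: "\<forall>r\<in>R. [r] \<in> S r" unfolding S_def using branch_props[OF g] by blast
  have finS: "\<forall>r\<in>R. finite (S r)" unfolding S_def using branch_props[OF g] by blast
  have Rne: "R \<noteq> {}" using bb iV unfolding R_def by fastforce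
  have perf: "perfect_tree_b_matching b T M" using minM unfolding T_def min_perfect_tree_b_matching_def by blast
  have vM: "vld b T M" using perf unfolding perfect_tree_b_matching_def vld_def tree_edges_def by blast
  have lenM: "\<forall>q\<in>M. 2 \<le> length q" using perf unfolding perfect_tree_b_matching_def tree_edges_def by blast
  have iM: "[i] \<notin> M" using lenM by fastforce
  define Mr where "Mr = (\<lambda>r. restr i M (S r))"
  have Msub: "M \<subseteq> comb i R S True" using vM Teq unfolding vld_def by blast
  have Meq0: "M = comb i R Mr ([i] \<in> M)" using comb_restr[OF hS Msub] unfolding Mr_def .
  have Meq: "M = comb i R Mr False" using Meq0 iM by simp
  have subr: "\<forall>r\<in>R. Mr r \<subseteq> S r" unfolding Mr_def by (simp add: restr_sub)
  have hM: "hdok R Mr" using hdok_sub[OF hS subr] .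
  have finM: "\<forall>r\<in>R. finite (Mr r)" using subr finS finite_subset by metis
  define Sel where "Sel = {r \<in> R. [r] \<in> Mr r}"
  have vv: "(\<forall>r\<in>R. vld b (S r) (Mr r)) \<and> (R \<noteq> {} \<longrightarrow> (if False then 1 else 0) + card {r \<in> R. [r] \<in> Mr r} = b i)"
    using comb_valid[OF finR hS sr subr, of b i False] vM Teq Meq by simp
  have vMr: "\<forall>r\<in>R. vld b (S r) (Mr r)" using vv by blast
  have cSel: "card Sel = b i" using vv Rne unfolding Sel_def by simp
  have SelR: "Sel \<subseteq> R" unfolding Sel_def by blast
  have rhs: "{{i, last q} | q. q \<in> M \<and> length q = 2} = {{i, r} | r. r \<in> Sel}"
  proof (rule set_eqI, rule iffI)
    fix e assume "e \<in> {{i, last q} | q. q \<in> M \<and> length q = 2}"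
    then obtain q where q: "e = {i, last q}" "q \<in> M" "length q = 2" by blast
    then have "q \<in> comb i R Mr False" using Meq by simp
    then obtain p where p: "q = i # p" "p \<noteq> []" "hd p \<in> R" "p \<in> Mr (hd p)"
      unfolding comb_mem[OF hM] by blast
    obtain r where pe: "p = [r]" using p(1,2) q(3) by (cases p) auto
    then have "last q = r" using p(1) by simp
    moreover have "r \<in> Sel" using p(3,4) pe unfolding Sel_def by simp
    ultimately
    show "e \<in> {{i, r} | r. r \<in> Sel}" using q by blast
  next
    fix e assume "e \<in> {{i, r} | r. r \<in> Sel}"
    then obtain r where r: "e = {i, r}" "r \<in> Sel" by blast
    then have "[i, r] \<in> comb i R Mr False" using comb_Cons[OF hM, of "[r]" i False] unfolding Sel_def by simp
    then have "[i, r] \<in> M" using Meq by simp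
    then show "e \<in> {{i, last q} | q. q \<in> M \<and> length q = 2}" using r by force
  qed
  have "\<forall>r\<in>R. \<exists>N0 N1. goodpair b w (S r) r i N0 N1 \<and> cost w i N1 - cost w i N0 = f r"
    unfolding S_def f_def using main[OF g bb] RV by blast
  then obtain n0 n1 where nn: "\<forall>r\<in>R. goodpair b w (S r) r i (n0 r) (n1 r) \<and> cost w i (n1 r) - cost w i (n0 r) = f r"
    by metis
  have FS: "F = Sel"
  proof (rule ccontr)
    assume ne: "F \<noteq> Sel"
    have FR: "F \<subseteq> R" and cF: "card F = b i"
      and fo: "\<forall>j\<in>F. \<forall>k\<in>R - F. f j \<le> f k"
      using bp unfolding bp_choice_def R_def f_def by auto
    have finF: "finite F" "finite Sel" using FR SelR finR finite_subset by auto
    obtain x where x: "x \<in> F" "x \<notin> Sel"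
    proof -
      have "\<not> F \<subseteq> Sel"
      proof
        assume "F \<subseteq> Sel" then have "F = Sel" using card_subset_eq[OF finF(2)] cF cSel by metis
        then show False using ne by simp
      qed
      then show ?thesis using that by blast
    qed
    obtain y where y: "y \<in> Sel" "y \<notin> F"
    proof -
      have "\<not> Sel \<subseteq> F"
      proof
        assume "Sel \<subseteq> F" then have "Sel = F" using card_subset_eq[OF finF(1)] cF cSel by metis
        then show False using ne by simp
      qed
      then show ?thesis using that by blast
    qed
    have xR: "x \<in> R" using x FR by blast
    have yR: "y \<in> R" using y SelR by blast
    have xy: "x \<noteq> y" using x y by blast
    have fxy: "f x \<le> f y" using fo x(1) yR y(2) by blast
    define Nf where "Nf = (\<lambda>r. if r = x then n1 x else if r = y then n0 y else Mr r)"
    define M' where "M' = comb i R Nf False"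
    have vN: "\<forall>r\<in>R. vld b (S r) (Nf r)" using nn vMr xR yR unfolding Nf_def goodpair_def by auto
    have subN: "\<forall>r\<in>R. Nf r \<subseteq> S r" using vN unfolding vld_def by blast
    have hN: "hdok R Nf" using hdok_sub[OF hS subN] .
    have finN: "\<forall>r\<in>R. finite (Nf r)" using subN finS finite_subset by metis
    have selN: "{r \<in> R. [r] \<in> Nf r} = insert x (Sel - {y})"
      using nn xR yR xy x(2) unfolding Nf_def goodpair_def Sel_def by auto
    have cN: "card {r \<in> R. [r] \<in> Nf r} = b i"
    proof -
      have "card (insert x (Sel - {y})) = Suc (card (Sel - {y}))" using finF x(2) by simp
      also have "card (Sel - {y}) = card Sel - 1" using y(1) finF by simp
      finally show ?thesis using selN cSel bb iV by auto
    qed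
    have vM': "vld b T M'" unfolding Teq M'_def
      using comb_valid[OF finR hS sr subN, of b i False] vN cN by simp
    have lenM': "\<forall>q\<in>M'. 2 \<le> length q"
    proof
      fix q assume "q \<in> M'"
      then obtain p where "q = i # p" "p \<noteq> []" unfolding M'_def comb_mem[OF hN] by blast
      then show "2 \<le> length q" by (cases p) auto
    qed
    have perf': "perfect_tree_b_matching b T M'"
      using vM' lenM' unfolding perfect_tree_b_matching_def vld_def tree_edges_def by blast
    have costM: "(\<Sum>q\<in>M. tree_edge_weight w q) = (\<Sum>r\<in>R. cost w i (Mr r))"
      unfolding tew_cost[OF lenM, where w=w and i=i] using cost_comb[OF finR hM finM, where w=w and j=i and m=False and i=i] Meq by simp
    have costM': "(\<Sum>q\<in>M'. tree_edge_weight w q) = (\<Sum>r\<in>R. cost w i (Nf r))"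
      using tew_cost[OF lenM', where w=w and i=i] cost_comb[OF finR hN finN, where w=w and j=i and m=False and i=i]
      unfolding M'_def by simp
    define d where "d = (\<lambda>r. (if r = x then f x else 0) - (if r = y then f y else 0))"
    have "(\<Sum>r\<in>R. cost w i (Nf r)) \<le> (\<Sum>r\<in>R. cost w i (Mr r) + d r)"
    proof (rule sum_mono)
      fix r assume r: "r \<in> R"
      show "cost w i (Nf r) \<le> cost w i (Mr r) + d r"
      proof (cases "r = x")
        case True
        have "[x] \<notin> Mr x" using x(2) xR unfolding Sel_def by blast
        then have "cost w i (n0 x) \<le> cost w i (Mr x)" using nn xR vMr unfolding goodpair_def by blast
        moreover have "cost w i (n1 x) - cost w i (n0 x) = f x" using nn xR by blast
        ultimately show ?thesis using True xy unfolding Nf_def d_def by simp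
      next
        case False
        show ?thesis
        proof (cases "r = y")
          case True
          have "[y] \<in> Mr y" using y(1) unfolding Sel_def by blast
          then have "cost w i (n1 y) \<le> cost w i (Mr y)" using nn yR vMr unfolding goodpair_def by blast
          moreover have "cost w i (n1 y) - cost w i (n0 y) = f y" using nn yR by blast
          ultimately show ?thesis using True xy unfolding Nf_def d_def by simp
        next
          case False
          then show ?thesis using \<open>r \<noteq> x\<close> unfolding Nf_def d_def by simp
        qed
      qed
    qed
    also have "\<dots> = (\<Sum>r\<in>R. cost w i (Mr r)) + sum d R" by (simp add: sum.distrib)
    also have "sum d R = f x - f y" unfolding d_def using finR xR yR by (simp add: sum_subtractf)
    finally have le: "(\<Sum>q\<in>M'. tree_edge_weight w q) \<le> (\<Sum>q\<in>M. tree_edge_weight w q)"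
      using costM costM' fxy by linarith
    have "min_perfect_tree_b_matching w b T M'"
      unfolding min_perfect_tree_b_matching_def
    proof (intro conjI allI impI)
      show "perfect_tree_b_matching b T M'" by (rule perf')
    next
      fix M'' assume "perfect_tree_b_matching b T M''"
      then have "(\<Sum>q\<in>M. tree_edge_weight w q) \<le> (\<Sum>q\<in>M''. tree_edge_weight w q)"
        using minM unfolding T_def min_perfect_tree_b_matching_def by blast
      then show "(\<Sum>q\<in>M'. tree_edge_weight w q) \<le> (\<Sum>q\<in>M''. tree_edge_weight w q)" using le by linarith
    qed
    then have "M' = M" using uniq unfolding T_def by blast
    moreover have "restr i M' (S y) = n0 y" unfolding M'_def using restr_comb[OF hS subN yR] xy unfolding Nf_def by simp
    moreover have "[y] \<notin> n0 y" using nn yR unfolding goodpair_def by blast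
    moreover have "[y] \<in> Mr y" using y(1) unfolding Sel_def by blast
    ultimately show False unfolding Mr_def by simp
  qed
  show ?thesis unfolding rhs FS by blast
qed

end
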